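(* Let $N\ge 2$, $n\ge1$. Let $\{\mathcal{G}_k : k\in\mathcal{P}\}$, $\mathcal{P}=\{1,\ldots,Q\}$, be a finite family of weighted digraphs on the node set $\{1,\ldots,N\}$ with weights $a^k_{ij}\ge0$, $a^k_{ii}=0$, and let $\sigma:[0,\infty)\to\mathcal{P}$ be a right-continuous, piecewise constant switching signal whose consecutive switching instants are separated by at least a dwell time $T_{\min}>0$. Assume there exists $T>0$ such that for every $t_0\ge0$ the union graph $\bigcup_{t\in[t_0,t_0+T)}\mathcal{G}_{\sigma(t)}$ contains a directed spanning tree. Let $f:\mathbb{R}^n\to\mathbb{R}^n$ be continuous, $\Gamma$ a positive definite diagonal $n\times n$ matrix, and suppose there exist positive definite diagonal matrices $Q=\mathrm{diag}\{q^1,\ldots,q^n\}$ and $\Sigma=\mathrm{diag}\{\delta^1,\ldots,\delta^n\}$ such that for all $x,y\in\mathbb{R}^n$, $$(x-y)^{\mathrm{T}}Q\big(f(x)-f(y)-\Sigma x+\Sigma y\big)\ge 0.$$ Consider, for a coupling strength $\phi>0$, $$\dot{x}_i=f(x_i)+\phi\sum_{j=1}^N a_{ij}^{\sigma(t)}\Gamma(x_j-x_i),\qquad i=1,\ldots,N.$$ Then synchronization cannot be reached if $\phi$ is sufficiently small: there exists $\phi_*>0$ such that for every $\phi\in(0,\phi_* )$ the system does not achieve synchronization (i.e., it is not true that $\lim_{t\to\infty}\|x_i(t)-x_j(t)\|=0$ for all $i,j$ and all initial conditions).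
   Context: For a weighted digraph with weights $a_{ij}\ge0$, $a_{ij}>0$ means that $(j,i)$ is an edge (information flows from $j$ to $i$). A directed path is a sequence of edges $(i_1,i_2),(i_2,i_3),\ldots,(i_{q-1},i_q)$. A digraph contains a directed spanning tree if some node has a directed path to every other node. The union of a family of graphs on the same node set has as edge set the union of their edge sets. *)

theory Defs
  imports "HOL-Analysis.Analysis"
begin

definition diag_mat :: "real ^ 'n \<Rightarrow> real ^ 'n ^ 'n" where
  "diag_mat v = (\<chi> i j. if i = j then v $ i else 0)"

definition switching_signal :: "nat \<Rightarrow> real \<Rightarrow> (real \<Rightarrow> nat) \<Rightarrow> bool" where
  "switching_signal Qm Tmin \<sigma> \<longleftrightarrow>
     (\<forall>t\<ge>0. \<sigma> t \<in> {1..Qm}) \<and>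
     (\<exists>\<tau>::nat \<Rightarrow> real. \<tau> 0 = 0 \<and> (\<forall>m. \<tau> (Suc m) - \<tau> m \<ge> Tmin) \<and>
        (\<forall>m. \<forall>t. \<tau> m \<le> t \<and> t < \<tau> (Suc m) \<longrightarrow> \<sigma> t = \<sigma> (\<tau> m)))"

definition union_edges ::
  "nat \<Rightarrow> (nat \<Rightarrow> nat \<Rightarrow> nat \<Rightarrow> real) \<Rightarrow> (real \<Rightarrow> nat) \<Rightarrow> real \<Rightarrow> real \<Rightarrow> (nat \<times> nat) set" where
  "union_edges N a \<sigma> t0 T =
     {(j, i). j \<in> {1..N} \<and> i \<in> {1..N} \<and> (\<exists>t. t0 \<le> t \<and> t < t0 + T \<and> a (\<sigma> t) i j > 0)}"

text \<open>A digraph on nodes {1..N} contains a directed spanning tree iff some node has a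
  directed path to every other node.\<close>
definition has_spanning_tree :: "nat \<Rightarrow> (nat \<times> nat) set \<Rightarrow> bool" where
  "has_spanning_tree N E \<longleftrightarrow> (\<exists>r\<in>{1..N}. \<forall>i\<in>{1..N}. i \<noteq> r \<longrightarrow> (r, i) \<in> E\<^sup>+)"

text \<open>x : node \<Rightarrow> time \<Rightarrow> state is a solution on [0,\<infinity>) of
  x_i' = f(x_i) + phi * sum_j a^{sigma t}_{ij} Gamma (x_j - x_i), i = 1..N
  (continuous, with right derivative given by the right-hand side; sigma is right-continuous).\<close>
definition is_solution ::
  "nat \<Rightarrow> (nat \<Rightarrow> nat \<Rightarrow> nat \<Rightarrow> real) \<Rightarrow> (real \<Rightarrow> nat) \<Rightarrow> (real ^ 'n \<Rightarrow> real ^ 'n)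
    \<Rightarrow> real ^ 'n ^ 'n \<Rightarrow> real \<Rightarrow> (nat \<Rightarrow> real \<Rightarrow> real ^ 'n) \<Rightarrow> bool" where
  "is_solution N a \<sigma> f \<Gamma> \<phi> x \<longleftrightarrow>
     (\<forall>i\<in>{1..N}. continuous_on {0..} (x i) \<and>
        (\<forall>t\<ge>0. (x i has_vector_derivative
            (f (x i t) + \<phi> *\<^sub>R (\<Sum>j\<in>{1..N}. a (\<sigma> t) i j *\<^sub>R (\<Gamma> *v (x j t - x i t)))))
          (at t within {t..})))"

definition achieves_sync ::
  "nat \<Rightarrow> (nat \<Rightarrow> nat \<Rightarrow> nat \<Rightarrow> real) \<Rightarrow> (real \<Rightarrow> nat) \<Rightarrow> (real ^ 'n \<Rightarrow> real ^ 'n)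
    \<Rightarrow> real ^ 'n ^ 'n \<Rightarrow> real \<Rightarrow> bool" where
  "achieves_sync N a \<sigma> f \<Gamma> \<phi> \<longleftrightarrow>
     (\<forall>x0 :: nat \<Rightarrow> real ^ 'n. \<exists>x. is_solution N a \<sigma> f \<Gamma> \<phi> x \<and> (\<forall>i\<in>{1..N}. x i 0 = x0 i)) \<and>
     (\<forall>x. is_solution N a \<sigma> f \<Gamma> \<phi> x \<longrightarrow>
        (\<forall>i\<in>{1..N}. \<forall>j\<in>{1..N}. ((\<lambda>t. norm (x i t - x j t)) \<longlongrightarrow> 0) at_top))"

end

theory Submission
  imports Defs
begin


lemma mono_right_strict:
  fixes W :: "real \<Rightarrow> real"
  assumes cont: "continuous_on {0..} W"
    and der: "\<And>t. t \<ge> 0 \<Longrightarrow> \<exists>l>0. (W has_real_derivative l) (at t within {t..})"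
    and b: "b \<ge> 0"
  shows "W 0 \<le> W b"
proof (rule ccontr)
  assume nb: "\<not> W 0 \<le> W b"
  define S where "S = {t \<in> {0..b}. W 0 \<le> W t}"
  have cb: "continuous_on {0..b} W" using cont by (rule continuous_on_subset) auto
  have clS: "closed S" unfolding S_def
    by (rule continuous_on_closed_Collect_le[OF continuous_on_const cb]) auto
  have "0 \<in> S" using b by (auto simp: S_def)
  hence ne: "S \<noteq> {}" by auto
  have bdd: "bdd_above S" unfolding S_def by (auto intro: bdd_aboveI[of _ b])
  define s where "s = Sup S"
  have sS: "s \<in> S" unfolding s_def by (rule closed_contains_Sup[OF ne bdd clS])
  hence s0: "0 \<le> s" "s \<le> b" "W 0 \<le> W s" by (auto simp: S_def)
  have sb: "s < b" using s0 nb by (cases "s = b") auto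
  obtain l where l: "l > 0" "(W has_real_derivative l) (at s within {s..})" using der s0 by blast
  obtain d where d: "d > 0" "\<And>h. h > 0 \<Longrightarrow> s + h \<in> {s..} \<Longrightarrow> h < d \<Longrightarrow> W s < W (s + h)"
    using has_real_derivative_pos_inc_right[OF l(2) l(1)] by blast
  define h where "h = min (d/2) (b - s)"
  have h: "h > 0" "h < d" "s + h \<le> b" using d sb by (auto simp: h_def)
  have "W s < W (s + h)" using d(2)[of h] h by auto
  hence "s + h \<in> S" using s0 h by (auto simp: S_def)
  hence "s + h \<le> s" unfolding s_def by (rule cSup_upper[OF _ bdd])
  thus False using h by auto
qed

lemma mono_right:
  fixes g g' :: "real \<Rightarrow> real"
  assumes cont: "continuous_on {0..} g"
    and der: "\<And>t. t \<ge> 0 \<Longrightarrow> (g has_real_derivative g' t) (at t within {t..})"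
    and nn: "\<And>t. t \<ge> 0 \<Longrightarrow> g' t \<ge> 0"
    and b: "b \<ge> 0"
  shows "g 0 \<le> g b"
proof -
  have "g 0 \<le> g b + e * b" if e: "e > 0" for e
  proof -
    have "(\<lambda>t. g t + e * t) 0 \<le> (\<lambda>t. g t + e * t) b"
    proof (rule mono_right_strict[OF _ _ b])
      show "continuous_on {0..} (\<lambda>t. g t + e * t)" using cont by (intro continuous_intros) auto
      fix t :: real assume t: "t \<ge> 0"
      have "((\<lambda>t. g t + e * t) has_real_derivative g' t + e * 1) (at t within {t..})"
        using der[OF t] by (auto intro!: derivative_eq_intros)
      moreover have "g' t + e * 1 > 0" using nn[OF t] e by auto
      ultimately show "\<exists>l>0. ((\<lambda>t. g t + e * t) has_real_derivative l) (at t within {t..})" by blast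
    qed
    thus ?thesis by simp
  qed
  show ?thesis
  proof (cases "b = 0")
    case True thus ?thesis by simp
  next
    case False
    hence bp: "b > 0" using b by auto
    show ?thesis
    proof (rule field_le_epsilon)
      fix e :: real assume "e > 0"
      thus "g 0 \<le> g b + e" using \<open>\<And>e. e > 0 \<Longrightarrow> g 0 \<le> g b + e * b\<close>[of "e / b"] bp by auto
    qed
  qed
qed


lemma term_bound:
  fixes q e e' A g Am gs :: real
  assumes "q > 0" "0 \<le> A" "A \<le> Am" "0 \<le> g" "g \<le> gs"
  shows "\<bar>q * e * (A * (g * e'))\<bar> \<le> Am * gs / 2 * (q * e^2 + q * e'^2)"
proof -
  have ee: "\<bar>e\<bar> * \<bar>e'\<bar> \<le> (e^2 + e'^2) / 2"
  proof -
    have "0 \<le> (\<bar>e\<bar> - \<bar>e'\<bar>)^2" by simp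
    thus ?thesis by (simp add: power2_diff)
  qed
  have Ag: "A * g \<le> Am * gs" using assms by (intro mult_mono) auto
  have "\<bar>q * e * (A * (g * e'))\<bar> = q * (A * g) * (\<bar>e\<bar> * \<bar>e'\<bar>)"
    using assms by (simp add: abs_mult)
  also have "\<dots> \<le> q * (Am * gs) * ((e^2 + e'^2) / 2)"
    using assms Ag ee by (intro mult_mono) auto
  also have "\<dots> = Am * gs / 2 * (q * e^2 + q * e'^2)" by (simp add: algebra_simps)
  finally show ?thesis .
qed

lemma coupling_bound:
  fixes Y :: "nat \<Rightarrow> 'k::finite \<Rightarrow> real" and q g :: "'k \<Rightarrow> real" and A :: "nat \<Rightarrow> nat \<Rightarrow> real"
  assumes I: "finite I" and q: "\<And>k. q k > 0" and g: "\<And>k. 0 \<le> g k \<and> g k \<le> gs"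
    and A: "\<And>i l. i \<in> I \<Longrightarrow> l \<in> I \<Longrightarrow> 0 \<le> A i l \<and> A i l \<le> Am"
  shows "\<bar>\<Sum>i\<in>I. \<Sum>j\<in>I. \<Sum>k\<in>UNIV. q k * (Y i k - Y j k) * (\<Sum>l\<in>I. A i l * (g k * (Y l k - Y i k)))\<bar>
     \<le> Am * gs * card I * (\<Sum>i\<in>I. \<Sum>j\<in>I. \<Sum>k\<in>UNIV. q k * (Y i k - Y j k)^2)"
proof -
  define V where "V = (\<Sum>i\<in>I. \<Sum>j\<in>I. \<Sum>k\<in>UNIV. q k * (Y i k - Y j k)^2)"
  have "\<bar>\<Sum>i\<in>I. \<Sum>j\<in>I. \<Sum>k\<in>UNIV. q k * (Y i k - Y j k) * (\<Sum>l\<in>I. A i l * (g k * (Y l k - Y i k)))\<bar>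
     = \<bar>\<Sum>i\<in>I. \<Sum>j\<in>I. \<Sum>k\<in>UNIV. \<Sum>l\<in>I. q k * (Y i k - Y j k) * (A i l * (g k * (Y l k - Y i k)))\<bar>"
    by (simp add: sum_distrib_left)
  also have "\<dots> \<le> (\<Sum>i\<in>I. \<Sum>j\<in>I. \<Sum>k\<in>UNIV. \<Sum>l\<in>I. \<bar>q k * (Y i k - Y j k) * (A i l * (g k * (Y l k - Y i k)))\<bar>)"
    by (rule order_trans[OF sum_abs], rule sum_mono, rule order_trans[OF sum_abs], rule sum_mono, rule order_trans[OF sum_abs], rule sum_mono, rule sum_abs)
  also have "\<dots> \<le> (\<Sum>i\<in>I. \<Sum>j\<in>I. \<Sum>k\<in>UNIV. \<Sum>l\<in>I. Am * gs / 2 * (q k * (Y i k - Y j k)^2 + q k * (Y l k - Y i k)^2))"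
    by (intro sum_mono term_bound) (use q g A in auto)
  also have "\<dots> = Am * gs / 2 * ((\<Sum>i\<in>I. \<Sum>j\<in>I. \<Sum>k\<in>UNIV. \<Sum>l\<in>I. q k * (Y i k - Y j k)^2)
        + (\<Sum>i\<in>I. \<Sum>j\<in>I. \<Sum>k\<in>UNIV. \<Sum>l\<in>I. q k * (Y l k - Y i k)^2))"
    by (simp add: sum_distrib_left sum.distrib algebra_simps)
  finally have main: "\<bar>\<Sum>i\<in>I. \<Sum>j\<in>I. \<Sum>k\<in>UNIV. q k * (Y i k - Y j k) * (\<Sum>l\<in>I. A i l * (g k * (Y l k - Y i k)))\<bar>
     \<le> Am * gs / 2 * ((\<Sum>i\<in>I. \<Sum>j\<in>I. \<Sum>k\<in>UNIV. \<Sum>l\<in>I. q k * (Y i k - Y j k)^2)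
        + (\<Sum>i\<in>I. \<Sum>j\<in>I. \<Sum>k\<in>UNIV. \<Sum>l\<in>I. q k * (Y l k - Y i k)^2))" .
  have e1: "(\<Sum>i\<in>I. \<Sum>j\<in>I. \<Sum>k\<in>UNIV. \<Sum>l\<in>I. q k * (Y i k - Y j k)^2) = card I * V"
    by (simp add: V_def sum_distrib_left)
  have "(\<Sum>i\<in>I. \<Sum>j\<in>I. \<Sum>k\<in>UNIV. \<Sum>l\<in>I. q k * (Y l k - Y i k)^2)
      = (\<Sum>i\<in>I. \<Sum>j\<in>I. \<Sum>l\<in>I. \<Sum>k\<in>UNIV. q k * (Y l k - Y i k)^2)"
    by (rule sum.cong[OF refl], rule sum.cong[OF refl], rule sum.swap)
  also have "\<dots> = (\<Sum>i\<in>I. card I * (\<Sum>l\<in>I. \<Sum>k\<in>UNIV. q k * (Y l k - Y i k)^2))"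
    by simp
  also have "\<dots> = card I * (\<Sum>i\<in>I. \<Sum>l\<in>I. \<Sum>k\<in>UNIV. q k * (Y l k - Y i k)^2)"
    by (simp add: sum_distrib_left)
  also have "(\<Sum>i\<in>I. \<Sum>l\<in>I. \<Sum>k\<in>UNIV. q k * (Y l k - Y i k)^2) = (\<Sum>l\<in>I. \<Sum>i\<in>I. \<Sum>k\<in>UNIV. q k * (Y l k - Y i k)^2)"
    by (rule sum.swap)
  finally have e2: "(\<Sum>i\<in>I. \<Sum>j\<in>I. \<Sum>k\<in>UNIV. \<Sum>l\<in>I. q k * (Y l k - Y i k)^2) = card I * V"
    by (simp add: V_def)
  from main show ?thesis unfolding e1 e2 by (simp add: V_def algebra_simps)
qed

lemma diag_mat_comp: "(diag_mat v *v w) $ k = v $ k * w $ k"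
  by (simp add: diag_mat_def matrix_vector_mult_def if_distrib[of "\<lambda>x. x * _"] cong: if_cong)

lemma static_ineq:
  fixes y :: "nat \<Rightarrow> real ^ 'n" and f :: "real ^ 'n \<Rightarrow> real ^ 'n" and \<gamma> q \<delta> :: "real ^ 'n"
    and A :: "nat \<Rightarrow> nat \<Rightarrow> real"
  assumes I: "finite I" and q: "\<And>k. q $ k > 0" and g: "\<And>k. 0 \<le> \<gamma> $ k \<and> \<gamma> $ k \<le> gs"
    and dm: "\<And>k. dm \<le> \<delta> $ k"
    and A: "\<And>i l. i \<in> I \<Longrightarrow> l \<in> I \<Longrightarrow> 0 \<le> A i l \<and> A i l \<le> Am"
    and phi: "0 \<le> \<phi>" "\<phi> * Am * gs * card I * 2 \<le> dm"
    and QUAD: "\<And>x y. (x - y) \<bullet> (diag_mat q *v (f x - f y - diag_mat \<delta> *v x + diag_mat \<delta> *v y)) \<ge> 0"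
  shows "0 \<le> (\<Sum>i\<in>I. \<Sum>j\<in>I. \<Sum>k\<in>UNIV. q $ k * (2 * (y i $ k - y j $ k) *
     ((f (y i) + \<phi> *\<^sub>R (\<Sum>l\<in>I. A i l *\<^sub>R (diag_mat \<gamma> *v (y l - y i)))) $ k
      - (f (y j) + \<phi> *\<^sub>R (\<Sum>l\<in>I. A j l *\<^sub>R (diag_mat \<gamma> *v (y l - y j)))) $ k)))"
proof -
  define Y where "Y i k = y i $ k" for i k
  define ff where "ff i k = f (y i) $ k" for i k
  define C where "C i k = (\<Sum>l\<in>I. A i l * (\<gamma> $ k * (Y l k - Y i k)))" for i k
  define V where "V = (\<Sum>i\<in>I. \<Sum>j\<in>I. \<Sum>k\<in>UNIV. q $ k * (Y i k - Y j k)^2)"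
  have comp: "(f (y i) + \<phi> *\<^sub>R (\<Sum>l\<in>I. A i l *\<^sub>R (diag_mat \<gamma> *v (y l - y i)))) $ k
      = ff i k + \<phi> * C i k" for i k
    by (simp add: ff_def C_def Y_def diag_mat_comp)
  have V0: "0 \<le> V" unfolding V_def using q by (intro sum_nonneg mult_nonneg_nonneg) (auto intro: less_imp_le)
  have split: "(\<Sum>i\<in>I. \<Sum>j\<in>I. \<Sum>k\<in>UNIV. q $ k * (2 * (y i $ k - y j $ k) *
     ((f (y i) + \<phi> *\<^sub>R (\<Sum>l\<in>I. A i l *\<^sub>R (diag_mat \<gamma> *v (y l - y i)))) $ k
      - (f (y j) + \<phi> *\<^sub>R (\<Sum>l\<in>I. A j l *\<^sub>R (diag_mat \<gamma> *v (y l - y j)))) $ k)))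
    = 2 * (\<Sum>i\<in>I. \<Sum>j\<in>I. \<Sum>k\<in>UNIV. q $ k * (Y i k - Y j k) * (ff i k - ff j k))
      + 2 * \<phi> * ((\<Sum>i\<in>I. \<Sum>j\<in>I. \<Sum>k\<in>UNIV. q $ k * (Y i k - Y j k) * C i k)
          - (\<Sum>i\<in>I. \<Sum>j\<in>I. \<Sum>k\<in>UNIV. q $ k * (Y i k - Y j k) * C j k))"
    unfolding comp by (simp add: Y_def sum_distrib_left sum.distrib sum_subtractf algebra_simps)
  have swap: "(\<Sum>i\<in>I. \<Sum>j\<in>I. \<Sum>k\<in>UNIV. q $ k * (Y i k - Y j k) * C j k)
      = - (\<Sum>i\<in>I. \<Sum>j\<in>I. \<Sum>k\<in>UNIV. q $ k * (Y i k - Y j k) * C i k)"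
  proof -
    have "(\<Sum>i\<in>I. \<Sum>j\<in>I. \<Sum>k\<in>UNIV. q $ k * (Y i k - Y j k) * C j k)
       = (\<Sum>j\<in>I. \<Sum>i\<in>I. \<Sum>k\<in>UNIV. q $ k * (Y i k - Y j k) * C j k)"
      by (rule sum.swap)
    also have "\<dots> = - (\<Sum>i\<in>I. \<Sum>j\<in>I. \<Sum>k\<in>UNIV. q $ k * (Y i k - Y j k) * C i k)"
      by (simp add: sum_negf[symmetric] algebra_simps)
    finally show ?thesis .
  qed
  have cb: "\<bar>\<Sum>i\<in>I. \<Sum>j\<in>I. \<Sum>k\<in>UNIV. q $ k * (Y i k - Y j k) * C i k\<bar> \<le> Am * gs * card I * V"
    unfolding C_def V_def
    using coupling_bound[OF I, of "\<lambda>k. q $ k" "\<lambda>k. \<gamma> $ k" gs A Am Y] q g A by simp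
  have fpart: "dm * V \<le> (\<Sum>i\<in>I. \<Sum>j\<in>I. \<Sum>k\<in>UNIV. q $ k * (Y i k - Y j k) * (ff i k - ff j k))"
    unfolding V_def sum_distrib_left
  proof (rule sum_mono, rule sum_mono)
    fix i j
    have "0 \<le> (y i - y j) \<bullet> (diag_mat q *v (f (y i) - f (y j) - diag_mat \<delta> *v y i + diag_mat \<delta> *v y j))"
      by (rule QUAD)
    also have "\<dots> = (\<Sum>k\<in>UNIV. q $ k * (Y i k - Y j k) * (ff i k - ff j k))
        - (\<Sum>k\<in>UNIV. q $ k * \<delta> $ k * (Y i k - Y j k)^2)"
      by (simp add: inner_vec_def diag_mat_comp Y_def ff_def sum_subtractf[symmetric] power2_eq_square algebra_simps)
    finally have 1: "(\<Sum>k\<in>UNIV. q $ k * \<delta> $ k * (Y i k - Y j k)^2) \<le> (\<Sum>k\<in>UNIV. q $ k * (Y i k - Y j k) * (ff i k - ff j k))"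
      by simp
    have "(\<Sum>k\<in>UNIV. dm * (q $ k * (Y i k - Y j k)^2)) \<le> (\<Sum>k\<in>UNIV. q $ k * \<delta> $ k * (Y i k - Y j k)^2)"
    proof (rule sum_mono)
      fix k
      have "dm * (q $ k * (Y i k - Y j k)^2) \<le> \<delta> $ k * (q $ k * (Y i k - Y j k)^2)"
        using dm q[of k] by (intro mult_right_mono) (auto intro: less_imp_le)
      thus "dm * (q $ k * (Y i k - Y j k)^2) \<le> q $ k * \<delta> $ k * (Y i k - Y j k)^2" by (simp add: algebra_simps)
    qed
    with 1 show "(\<Sum>k\<in>UNIV. dm * (q $ k * (Y i k - Y j k)^2)) \<le> (\<Sum>k\<in>UNIV. q $ k * (Y i k - Y j k) * (ff i k - ff j k))"
      by linarith
  qed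
  define S where "S = (\<Sum>i\<in>I. \<Sum>j\<in>I. \<Sum>k\<in>UNIV. q $ k * (Y i k - Y j k) * C i k)"
  have cb': "- (Am * gs * card I * V) \<le> S" using cb unfolding S_def by linarith
  have "\<phi> * (- (Am * gs * card I * V)) \<le> \<phi> * S" using phi(1) cb' by (rule mult_left_mono[rotated])
  hence "- (\<phi> * Am * gs * card I * 2 * V) \<le> 2 * \<phi> * S" by (simp add: algebra_simps)
  moreover have "\<phi> * Am * gs * card I * 2 * V \<le> dm * V" using phi(2) V0 by (rule mult_right_mono)
  ultimately have "0 \<le> 2 * (dm * V) + 2 * \<phi> * (S - (- S))" by (simp add: algebra_simps)
  also have "\<dots> \<le> 2 * (\<Sum>i\<in>I. \<Sum>j\<in>I. \<Sum>k\<in>UNIV. q $ k * (Y i k - Y j k) * (ff i k - ff j k)) + 2 * \<phi> * (S - (- S))"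
    using fpart by simp
  finally show ?thesis unfolding split swap S_def .
qed



theorem theorem6:
  fixes N Qm :: nat and a :: "nat \<Rightarrow> nat \<Rightarrow> nat \<Rightarrow> real" and \<sigma> :: "real \<Rightarrow> nat"
    and Tmin T :: real and f :: "real ^ 'n \<Rightarrow> real ^ 'n"
    and \<gamma> q \<delta> :: "real ^ 'n"
  assumes N2: "N \<ge> 2"
    and Qm: "Qm \<ge> 1"
    and a_nonneg: "\<And>k i j. k \<in> {1..Qm} \<Longrightarrow> i \<in> {1..N} \<Longrightarrow> j \<in> {1..N} \<Longrightarrow> a k i j \<ge> 0"
    and a_diag: "\<And>k i. k \<in> {1..Qm} \<Longrightarrow> i \<in> {1..N} \<Longrightarrow> a k i i = 0"
    and Tmin: "Tmin > 0"
    and sw: "switching_signal Qm Tmin \<sigma>"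
    and T: "T > 0"
    and conn: "\<And>t0. t0 \<ge> 0 \<Longrightarrow> has_spanning_tree N (union_edges N a \<sigma> t0 T)"
    and f_cont: "continuous_on UNIV f"
    and \<gamma>_pos: "\<And>k. \<gamma> $ k > 0"
    and q_pos: "\<And>k. q $ k > 0"
    and \<delta>_pos: "\<And>k. \<delta> $ k > 0"
    and QUAD: "\<And>x y. (x - y) \<bullet> (diag_mat q *v (f x - f y - diag_mat \<delta> *v x + diag_mat \<delta> *v y)) \<ge> 0"
  shows "\<exists>\<phi>s > 0. \<forall>\<phi>. 0 < \<phi> \<and> \<phi> < \<phi>s \<longrightarrow> \<not> achieves_sync N a \<sigma> f (diag_mat \<gamma>) \<phi>"
proof -
  define I where "I = {1..N}"
  have finI: "finite I" and cardI: "card I = N" by (auto simp: I_def)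
  define gs where "gs = (\<Sum>k\<in>UNIV. \<gamma> $ k)"
  have gk: "0 \<le> \<gamma> $ k \<and> \<gamma> $ k \<le> gs" for k
  proof
    show "0 \<le> \<gamma> $ k" using \<gamma>_pos[of k] by simp
    show "\<gamma> $ k \<le> gs" unfolding gs_def
      by (rule member_le_sum) (auto intro: less_imp_le \<gamma>_pos)
  qed
  have gs_pos: "gs > 0" using gk[of undefined] \<gamma>_pos[of undefined] by linarith
  define Am where "Am = 1 + (\<Sum>k\<in>{1..Qm}. \<Sum>i\<in>{1..N}. \<Sum>j\<in>{1..N}. a k i j)"
  have aAm: "a k i j \<le> Am" if "k \<in> {1..Qm}" "i \<in> {1..N}" "j \<in> {1..N}" for k i j
  proof -
    have "a k i j \<le> (\<Sum>j\<in>{1..N}. a k i j)"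
      using that a_nonneg by (intro member_le_sum) auto
    also have "\<dots> \<le> (\<Sum>i\<in>{1..N}. \<Sum>j\<in>{1..N}. a k i j)"
      using that a_nonneg by (intro member_le_sum[of i _ "\<lambda>i. \<Sum>j\<in>{1..N}. a k i j"] sum_nonneg) auto
    also have "\<dots> \<le> (\<Sum>k\<in>{1..Qm}. \<Sum>i\<in>{1..N}. \<Sum>j\<in>{1..N}. a k i j)"
      using that a_nonneg by (intro member_le_sum[of k _ "\<lambda>k. \<Sum>i\<in>{1..N}. \<Sum>j\<in>{1..N}. a k i j"] sum_nonneg) auto
    finally show ?thesis unfolding Am_def by linarith
  qed
  have Am_pos: "Am > 0"
  proof -
    have "0 \<le> (\<Sum>k\<in>{1..Qm}. \<Sum>i\<in>{1..N}. \<Sum>j\<in>{1..N}. a k i j)"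
      using a_nonneg by (intro sum_nonneg) auto
    thus ?thesis unfolding Am_def by linarith
  qed
  define dm where "dm = Min (range (\<lambda>k. \<delta> $ k))"
  have dm_le: "dm \<le> \<delta> $ k" for k unfolding dm_def by (rule Min_le) auto
  have dm_pos: "dm > 0" unfolding dm_def using \<delta>_pos by (subst Min_gr_iff) auto
  have N0: "real N > 0" using N2 by auto
  define \<phi>s where "\<phi>s = dm / (Am * gs * real N * 2)"
  have "\<phi>s > 0" unfolding \<phi>s_def using dm_pos Am_pos gs_pos N0 by simp
  moreover have "\<not> achieves_sync N a \<sigma> f (diag_mat \<gamma>) \<phi>" if \<phi>: "0 < \<phi>" "\<phi> < \<phi>s" for \<phi>
  proof
    assume AS: "achieves_sync N a \<sigma> f (diag_mat \<gamma>) \<phi>"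
    define x0 :: "nat \<Rightarrow> real ^ 'n" where "x0 i = (if i = 1 then 1 else 0)" for i
    obtain x where sol: "is_solution N a \<sigma> f (diag_mat \<gamma>) \<phi> x" and init: "\<And>i. i \<in> {1..N} \<Longrightarrow> x i 0 = x0 i"
      using AS unfolding achieves_sync_def by blast
    have syn: "\<And>i j. i \<in> I \<Longrightarrow> j \<in> I \<Longrightarrow> ((\<lambda>t. norm (x i t - x j t)) \<longlongrightarrow> 0) at_top"
      using AS sol unfolding achieves_sync_def I_def by blast
    have sig: "\<sigma> t \<in> {1..Qm}" if "t \<ge> 0" for t using sw that unfolding switching_signal_def by blast
    define D where "D i t = f (x i t) + \<phi> *\<^sub>R (\<Sum>l\<in>I. a (\<sigma> t) i l *\<^sub>R (diag_mat \<gamma> *v (x l t - x i t)))" for i t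
    have xcont: "continuous_on {0..} (x i)" if "i \<in> I" for i using sol that unfolding is_solution_def I_def by blast
    have xder: "(x i has_vector_derivative D i t) (at t within {t..})" if "i \<in> I" "t \<ge> 0" for i t
      using sol that unfolding is_solution_def I_def D_def by blast
    have dcomp: "((\<lambda>t. x i t $ k) has_real_derivative D i t $ k) (at t within {t..})" if "i \<in> I" "t \<ge> 0" for i t k
      using bounded_linear.has_vector_derivative[OF bounded_linear_vec_nth xder[OF that]]
      unfolding has_real_derivative_iff_has_vector_derivative by simp
    define V where "V t = (\<Sum>i\<in>I. \<Sum>j\<in>I. \<Sum>k\<in>UNIV. q $ k * (x i t $ k - x j t $ k)^2)" for t
    define V' where "V' t = (\<Sum>i\<in>I. \<Sum>j\<in>I. \<Sum>k\<in>UNIV. q $ k * (2 * (x i t $ k - x j t $ k) * (D i t $ k - D j t $ k)))" for t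
    have Vder: "(V has_real_derivative V' t) (at t within {t..})" if "t \<ge> 0" for t
    proof -
      have trm: "((\<lambda>t. q $ k * (x i t $ k - x j t $ k)^2) has_real_derivative
          q $ k * (2 * (x i t $ k - x j t $ k) * (D i t $ k - D j t $ k))) (at t within {t..})"
        if ij: "i \<in> I" "j \<in> I" for i j k
      proof -
        have "((\<lambda>t. x i t $ k - x j t $ k) has_real_derivative D i t $ k - D j t $ k) (at t within {t..})"
          by (intro DERIV_diff dcomp ij \<open>t \<ge> 0\<close>)
        from DERIV_cmult[OF DERIV_power[OF this, of 2], of "q $ k"]
        show ?thesis by (simp add: algebra_simps)
      qed
      show ?thesis unfolding V_def[abs_def] V'_def
        by (intro DERIV_sum trm)
    qed
    have Vcont: "continuous_on {0..} V"
      unfolding V_def[abs_def] by (intro continuous_intros xcont) auto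
    have V'nn: "0 \<le> V' t" if "t \<ge> 0" for t
      unfolding V'_def D_def
    proof (rule static_ineq[OF finI])
      show "0 < q $ k" for k by (rule q_pos)
      show "0 \<le> \<gamma> $ k \<and> \<gamma> $ k \<le> gs" for k by (rule gk)
      show "dm \<le> \<delta> $ k" for k by (rule dm_le)
      show "0 \<le> a (\<sigma> t) i l \<and> a (\<sigma> t) i l \<le> Am" if "i \<in> I" "l \<in> I" for i l
        using a_nonneg[OF sig[OF \<open>t \<ge> 0\<close>]] aAm[OF sig[OF \<open>t \<ge> 0\<close>]] that unfolding I_def by auto
      show "0 \<le> \<phi>" using \<phi> by simp
      have "\<phi> * (Am * gs * real N * 2) \<le> \<phi>s * (Am * gs * real N * 2)"
        using \<phi> Am_pos gs_pos N0 by (intro mult_right_mono) auto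
      also have "\<dots> = dm" unfolding \<phi>s_def using Am_pos gs_pos N0 by simp
      finally show "\<phi> * Am * gs * real (card I) * 2 \<le> dm" by (simp add: cardI algebra_simps)
      show "\<And>x y. (x - y) \<bullet> (diag_mat q *v (f x - f y - diag_mat \<delta> *v x + diag_mat \<delta> *v y)) \<ge> 0"
        by (rule QUAD)
    qed
    have Vmono: "V 0 \<le> V t" if "t \<ge> 0" for t
      by (rule mono_right[OF Vcont Vder V'nn that])
    have V0: "V 0 > 0"
    proof -
      have I1: "1 \<in> I" and I2: "2 \<in> I" using N2 by (auto simp: I_def)
      have nn: "0 \<le> (\<Sum>k\<in>UNIV. q $ k * (x i 0 $ k - x j 0 $ k)^2)" for i j
        using q_pos by (intro sum_nonneg mult_nonneg_nonneg) (auto intro: less_imp_le)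
      have "(\<Sum>k\<in>UNIV. q $ k * (x 1 0 $ k - x 2 0 $ k)^2) \<le> (\<Sum>j\<in>I. \<Sum>k\<in>UNIV. q $ k * (x 1 0 $ k - x j 0 $ k)^2)"
        using I2 nn finI by (intro member_le_sum) auto
      also have "\<dots> \<le> V 0" unfolding V_def
        using I1 finI by (intro member_le_sum[of 1 _ "\<lambda>i. \<Sum>j\<in>I. \<Sum>k\<in>UNIV. q $ k * (x i 0 $ k - x j 0 $ k)^2"]) (auto intro!: sum_nonneg nn)
      finally have le: "(\<Sum>k\<in>UNIV. q $ k * (x 1 0 $ k - x 2 0 $ k)^2) \<le> V 0" .
      have "x 1 0 = 1" "x 2 0 = 0" using init[of 1] init[of 2] N2 by (auto simp: x0_def)
      hence "(\<Sum>k\<in>UNIV. q $ k * (x 1 0 $ k - x 2 0 $ k)^2) = (\<Sum>k\<in>UNIV. q $ k)" by simp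
      moreover have "(\<Sum>k\<in>UNIV. q $ k) > 0" using q_pos by (intro sum_pos) auto
      ultimately show ?thesis using le by linarith
    qed
    have Vlim: "(V \<longlongrightarrow> 0) at_top"
      unfolding V_def[abs_def]
    proof (intro tendsto_null_sum)
      fix i j k assume ij: "i \<in> I" "j \<in> I"
      have c: "((\<lambda>t. x i t $ k - x j t $ k) \<longlongrightarrow> 0) at_top"
      proof (rule tendsto_0_le[OF syn[OF ij], of _ 1])
        show "\<forall>\<^sub>F t in at_top. norm (x i t $ k - x j t $ k) \<le> norm (norm (x i t - x j t)) * 1"
          using component_le_norm_cart[of "x i _ - x j _" k] by simp
      qed
      have "((\<lambda>t. q $ k * (x i t $ k - x j t $ k)^2) \<longlongrightarrow> q $ k * 0^2) at_top"
        by (intro tendsto_intros c)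
      thus "((\<lambda>t. q $ k * (x i t $ k - x j t $ k)^2) \<longlongrightarrow> 0) at_top" by simp
    qed
    have "V 0 \<le> 0"
      by (rule tendsto_lowerbound[OF Vlim]) (auto simp: eventually_at_top_linorder intro!: exI[of _ 0] Vmono)
    thus False using V0 by simp
  qed
  ultimately show ?thesis by blast
qed

end
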